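(* Let $\mathcal{A}_i\subset\mathbb{R}^{n_i}$, $i\in\mathbb{N}$, be nonempty closed sets and assume that $\mathcal{A}:=\{x\in X: x_i\in\mathcal{A}_i \text{ for all } i\in\mathbb{N}\}$ is nonempty. Then for every $x\in X$ there exists $y^*\in\mathcal{A}$ such that $|x|_{\mathcal{A}}=\sup_{i\in\mathbb{N}}|x_i|_{\mathcal{A}_i}=|x-y^*|_\infty$.
   Context: For each $i\in\mathbb{N}$ fix a positive integer $n_i$ and a norm $|\cdot|$ on $\mathbb{R}^{n_i}$. Let $X:=\{x=(x_i)_{i\in\mathbb{N}}: x_i\in\mathbb{R}^{n_i},\ \sup_i|x_i|<\infty\}$ with norm $|x|_\infty:=\sup_i|x_i|$. For $z\in\mathbb{R}^{n_i}$, $|z|_{\mathcal{A}_i}:=\inf_{y\in\mathcal{A}_i}|z-y|$, and for $x\in X$, $|x|_{\mathcal{A}}:=\inf_{y\in\mathcal{A}}|x-y|_\infty$. *)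

theory Defs
  imports "HOL-Analysis.Analysis"
begin

text \<open>The space R^n is represented as real sequences vanishing from index n on.\<close>
definition Rn :: "nat \<Rightarrow> (nat \<Rightarrow> real) set" where
  "Rn n = {v. \<forall>j\<ge>n. v j = 0}"

definition is_norm_on :: "nat \<Rightarrow> ((nat \<Rightarrow> real) \<Rightarrow> real) \<Rightarrow> bool" where
  "is_norm_on n N \<longleftrightarrow>
     (\<forall>v\<in>Rn n. 0 \<le> N v \<and> (N v = 0 \<longleftrightarrow> (\<forall>j. v j = 0))) \<and>
     (\<forall>v\<in>Rn n. \<forall>c. N (\<lambda>j. c * v j) = \<bar>c\<bar> * N v) \<and>
     (\<forall>v\<in>Rn n. \<forall>w\<in>Rn n. N (\<lambda>j. v j + w j) \<le> N v + N w)"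

definition Xsp :: "(nat \<Rightarrow> nat) \<Rightarrow> (nat \<Rightarrow> (nat \<Rightarrow> real) \<Rightarrow> real) \<Rightarrow> (nat \<Rightarrow> nat \<Rightarrow> real) set" where
  "Xsp n N = {x. (\<forall>i. x i \<in> Rn (n i)) \<and> bdd_above (range (\<lambda>i. N i (x i)))}"

definition norm_inf :: "(nat \<Rightarrow> (nat \<Rightarrow> real) \<Rightarrow> real) \<Rightarrow> (nat \<Rightarrow> nat \<Rightarrow> real) \<Rightarrow> real" where
  "norm_inf N x = (SUP i. N i (x i))"

definition dist_set :: "((nat \<Rightarrow> real) \<Rightarrow> real) \<Rightarrow> (nat \<Rightarrow> real) set \<Rightarrow> (nat \<Rightarrow> real) \<Rightarrow> real" where
  "dist_set Ni S z = Inf ((\<lambda>y. Ni (\<lambda>j. z j - y j)) ` S)"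

definition dist_setX :: "(nat \<Rightarrow> (nat \<Rightarrow> real) \<Rightarrow> real) \<Rightarrow> (nat \<Rightarrow> nat \<Rightarrow> real) set \<Rightarrow> (nat \<Rightarrow> nat \<Rightarrow> real) \<Rightarrow> real" where
  "dist_setX N S x = Inf ((\<lambda>y. norm_inf N (\<lambda>i j. x i j - y i j)) ` S)"

end

theory Submission
  imports Defs
begin

lemma Rn_diff: "v \<in> Rn n \<Longrightarrow> w \<in> Rn n \<Longrightarrow> (\<lambda>j. v j - w j) \<in> Rn n"
  by (simp add: Rn_def)
lemma Rn_add: "v \<in> Rn n \<Longrightarrow> w \<in> Rn n \<Longrightarrow> (\<lambda>j. v j + w j) \<in> Rn n"
  by (simp add: Rn_def)
lemma Rn_scale: "v \<in> Rn n \<Longrightarrow> (\<lambda>j. c * v j) \<in> Rn n"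
  by (simp add: Rn_def)

lemma nrm_nonneg: "is_norm_on n N \<Longrightarrow> v \<in> Rn n \<Longrightarrow> 0 \<le> N v"
  by (simp add: is_norm_on_def)
lemma nrm_zero: "is_norm_on n N \<Longrightarrow> N (\<lambda>j. 0) = 0"
  by (simp add: is_norm_on_def Rn_def)
lemma nrm_homog: "is_norm_on n N \<Longrightarrow> v \<in> Rn n \<Longrightarrow> N (\<lambda>j. c * v j) = \<bar>c\<bar> * N v"
  by (simp add: is_norm_on_def)
lemma nrm_tri: "is_norm_on n N \<Longrightarrow> v \<in> Rn n \<Longrightarrow> w \<in> Rn n \<Longrightarrow> N (\<lambda>j. v j + w j) \<le> N v + N w"
  by (simp add: is_norm_on_def)

lemma nrm_sym: assumes "is_norm_on n N" "v \<in> Rn n" "w \<in> Rn n"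
  shows "N (\<lambda>j. v j - w j) = N (\<lambda>j. w j - v j)"
proof -
  have "(\<lambda>j. w j - v j) = (\<lambda>j. (-1) * (v j - w j))" by auto
  then show ?thesis using nrm_homog[OF assms(1) Rn_diff[OF assms(2,3)], of "-1"] by simp
qed

lemma nrm_tri_diff: assumes "is_norm_on n N" "v \<in> Rn n" "w \<in> Rn n"
  shows "N (\<lambda>j. v j - w j) \<le> N v + N w"
proof -
  have e: "(\<lambda>j. v j - w j) = (\<lambda>j. v j + (-1) * w j)" by simp
  have h1: "N (\<lambda>j. v j + (-1) * w j) \<le> N v + N (\<lambda>j. (-1) * w j)"
    by (rule nrm_tri[OF assms(1,2) Rn_scale[OF assms(3)]])
  have h2: "N (\<lambda>j. (-1) * w j) = N w" using nrm_homog[OF assms(1,3), of "-1"] by simp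
  show ?thesis unfolding e using h1 h2 by linarith
qed

lemma nrm_rev: assumes "is_norm_on n N" "v \<in> Rn n" "w \<in> Rn n"
  shows "N v \<le> N w + N (\<lambda>j. v j - w j)"
proof -
  have e: "N v = N (\<lambda>j. w j + (v j - w j))" by simp
  have "N (\<lambda>j. w j + (v j - w j)) \<le> N w + N (\<lambda>j. v j - w j)"
    by (rule nrm_tri[OF assms(1,3) Rn_diff[OF assms(2,3)]])
  then show ?thesis unfolding e .
qed

definition ee :: "nat \<Rightarrow> nat \<Rightarrow> real" where "ee k = (\<lambda>i. if i = k then 1 else 0)"

lemma nrm_upper: assumes N: "is_norm_on n N" and v: "v \<in> Rn n"
  shows "N v \<le> (\<Sum>j<n. \<bar>v j\<bar> * N (ee j))"
proof -
  have key: "k \<le> n \<Longrightarrow> N (\<lambda>i. if i < k then v i else 0) \<le> (\<Sum>j<k. \<bar>v j\<bar> * N (ee j))" for k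
  proof (induction k)
    case 0
    have "(\<lambda>i::nat. if i < 0 then v i else 0) = (\<lambda>j. 0)" by simp
    then show ?case using nrm_zero[OF N] by simp
  next
    case (Suc k)
    have e: "ee k \<in> Rn n" using Suc.prems by (auto simp: Rn_def ee_def)
    have t: "(\<lambda>i. if i < k then v i else 0) \<in> Rn n" using v by (auto simp: Rn_def)
    have eq: "(\<lambda>i. if i < Suc k then v i else 0) = (\<lambda>i. (if i < k then v i else 0) + v k * ee k i)"
      by (rule ext) (auto simp: ee_def less_Suc_eq)
    have h1: "N (\<lambda>i. (if i < k then v i else 0) + v k * ee k i) \<le> N (\<lambda>i. if i < k then v i else 0) + N (\<lambda>i. v k * ee k i)"
      by (rule nrm_tri[OF N t Rn_scale[OF e]])
    have h2: "N (\<lambda>i. v k * ee k i) = \<bar>v k\<bar> * N (ee k)" by (rule nrm_homog[OF N e])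
    have h3: "N (\<lambda>i. if i < k then v i else 0) \<le> (\<Sum>j<k. \<bar>v j\<bar> * N (ee j))"
      by (rule Suc.IH) (use Suc.prems in simp)
    have h4: "(\<Sum>j<Suc k. \<bar>v j\<bar> * N (ee j)) = (\<Sum>j<k. \<bar>v j\<bar> * N (ee j)) + \<bar>v k\<bar> * N (ee k)"
      by simp
    show ?case unfolding eq h4 using h1 h2 h3 by linarith
  qed
  have eqv: "(\<lambda>i. if i < n then v i else 0) = v" using v by (auto simp: Rn_def)
  have "N (\<lambda>i. if i < n then v i else 0) \<le> (\<Sum>j<n. \<bar>v j\<bar> * N (ee j))" by (rule key) simp
  then show ?thesis unfolding eqv .
qed

lemma closed_Rn: "closed (Rn n)"
proof -
  have "Rn n = {v::nat\<Rightarrow>real. \<forall>j. n \<le> j \<longrightarrow> v j = 0}" by (simp add: Rn_def)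
  moreover have "closed {v::nat\<Rightarrow>real. \<forall>j. n \<le> j \<longrightarrow> v j = 0}"
    by (intro closed_Collect_all closed_Collect_imp closed_Collect_eq) (auto intro: continuous_on_product_coordinates)
  ultimately show ?thesis by simp
qed

lemma nrm_cont: assumes N: "is_norm_on n N"
  shows "continuous_on (Rn n) N"
  unfolding continuous_on_def
proof
  fix w assume w: "w \<in> Rn n"
  define g where "g = (\<lambda>v::nat\<Rightarrow>real. \<Sum>j<n. \<bar>v j - w j\<bar> * N (ee j))"
  have "continuous_on UNIV g" unfolding g_def
    by (intro continuous_intros continuous_on_product_coordinates)
  then have "(g \<longlongrightarrow> g w) (at w within Rn n)"
    by (meson UNIV_I continuous_on_def continuous_on_subset subset_UNIV w)
  then have g0: "(g \<longlongrightarrow> 0) (at w within Rn n)" by (simp add: g_def)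
  have "\<forall>\<^sub>F v in at w within Rn n. norm (N v - N w) \<le> g v"
  proof -
    have "norm (N v - N w) \<le> g v" if v: "v \<in> Rn n" for v
    proof -
      have "N v \<le> N w + N (\<lambda>j. v j - w j)" using nrm_rev[OF N v w] .
      moreover have "N w \<le> N v + N (\<lambda>j. w j - v j)" using nrm_rev[OF N w v] .
      moreover have "N (\<lambda>j. w j - v j) = N (\<lambda>j. v j - w j)" using nrm_sym[OF N v w] by simp
      moreover have "N (\<lambda>j. v j - w j) \<le> g v"
        using nrm_upper[OF N Rn_diff[OF v w]] by (simp add: g_def)
      ultimately show ?thesis by simp
    qed
    then show ?thesis by (simp add: eventually_at_filter)
  qed
  then have "((\<lambda>v. N v - N w) \<longlongrightarrow> 0) (at w within Rn n)"
    by (rule Lim_null_comparison[OF _ g0])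
  then show "(N \<longlongrightarrow> N w) (at w within Rn n)" by (simp add: LIM_zero_iff)
qed

lemma compact_box: assumes "\<And>j. compact (S j)"
  shows "compact {v::nat\<Rightarrow>real. \<forall>j. v j \<in> S j}"
proof -
  have "{v::nat\<Rightarrow>real. \<forall>j. v j \<in> S j} = PiE UNIV S" by (auto simp: PiE_def Pi_def)
  moreover have "compactin (product_topology (\<lambda>i. euclidean) UNIV) (PiE UNIV S)"
    using assms by (simp add: compactin_PiE)
  ultimately show ?thesis by (simp add: euclidean_product_topology)
qed


lemma nrm_lower: assumes N: "is_norm_on n N" and npos: "n > 0"
  shows "\<exists>c>0. \<forall>v\<in>Rn n. c * (\<Sum>j<n. \<bar>v j\<bar>) \<le> N v"
proof -
  define Sph where "Sph = Rn n \<inter> {v. (\<Sum>j<n. \<bar>v j\<bar>) = 1}"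
  define B where "B = {v::nat\<Rightarrow>real. \<forall>j. v j \<in> (if j < n then {-1..1} else {0})}"
  have cB: "compact B" unfolding B_def by (rule compact_box) auto
  have cl: "closed {v::nat\<Rightarrow>real. (\<Sum>j<n. \<bar>v j\<bar>) = 1}"
    by (intro closed_Collect_eq continuous_intros continuous_on_product_coordinates)
  have sub: "Sph \<subseteq> B"
  proof
    fix v assume v: "v \<in> Sph"
    have "\<bar>v j\<bar> \<le> 1" if "j < n" for j
    proof -
      have "\<bar>v j\<bar> \<le> (\<Sum>j<n. \<bar>v j\<bar>)"
        by (rule member_le_sum) (use that in auto)
      then show ?thesis using v by (simp add: Sph_def)
    qed
    then show "v \<in> B" using v by (auto simp: B_def Sph_def Rn_def abs_le_iff)
  qed
  have "Sph = B \<inter> Sph" using sub by auto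
  moreover have "closed Sph" unfolding Sph_def using closed_Rn cl by (rule closed_Int)
  ultimately have cS: "compact Sph" using cB by (metis compact_Int_closed)
  have "ee 0 \<in> Sph" using npos by (auto simp: Sph_def Rn_def ee_def if_distrib sum.If_cases)
  then have neS: "Sph \<noteq> {}" by auto
  have cont: "continuous_on Sph N" using nrm_cont[OF N] by (rule continuous_on_subset) (simp add: Sph_def)
  obtain v0 where v0: "v0 \<in> Sph" "\<And>v. v \<in> Sph \<Longrightarrow> N v0 \<le> N v"
    using continuous_attains_inf[OF cS neS cont] by blast
  have "N v0 \<noteq> 0"
  proof
    assume "N v0 = 0"
    then have "\<forall>j. v0 j = 0" using N v0(1) by (simp add: is_norm_on_def Sph_def)
    then show False using v0(1) by (simp add: Sph_def)
  qed
  then have c0: "N v0 > 0" using nrm_nonneg[OF N] v0(1) Sph_def by force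
  have "N v0 * (\<Sum>j<n. \<bar>v j\<bar>) \<le> N v" if v: "v \<in> Rn n" for v
  proof (cases "(\<Sum>j<n. \<bar>v j\<bar>) = 0")
    case True then show ?thesis using nrm_nonneg[OF N v] by simp
  next
    case False
    define s where "s = (\<Sum>j<n. \<bar>v j\<bar>)"
    have s0: "s > 0" using False unfolding s_def by (metis abs_ge_zero order_less_le sum_nonneg)
    have "(\<Sum>j<n. \<bar>(1/s) * v j\<bar>) = (1/s) * s" using s0
      by (simp add: s_def abs_mult sum_distrib_left)
    moreover have "(\<lambda>j. (1/s) * v j) \<in> Rn n" by (rule Rn_scale[OF v])
    ultimately have "(\<lambda>j. (1/s) * v j) \<in> Sph" using s0 by (simp add: Sph_def)
    then have "N v0 \<le> N (\<lambda>j. (1/s) * v j)" by (rule v0(2))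
    also have "\<dots> = N v / s" using nrm_homog[OF N v, of "1/s"] s0 by simp
    finally show ?thesis using s0 by (simp add: s_def[symmetric] field_simps)
  qed
  then show ?thesis using c0 by blast
qed

lemma attain: assumes N: "is_norm_on n N" and npos: "n > 0" and z: "z \<in> Rn n"
  and A: "A \<subseteq> Rn n" "A \<noteq> {}" "closed A"
  shows "\<exists>a\<in>A. \<forall>b\<in>A. N (\<lambda>j. z j - a j) \<le> N (\<lambda>j. z j - b j)"
proof -
  obtain c where c: "c > 0" "\<And>v. v \<in> Rn n \<Longrightarrow> c * (\<Sum>j<n. \<bar>v j\<bar>) \<le> N v"
    using nrm_lower[OF N npos] by blast
  obtain a0 where a0: "a0 \<in> A" using A by blast
  define r where "r = N (\<lambda>j. z j - a0 j)"
  define R where "R = (\<Sum>j<n. \<bar>z j\<bar>) + r / c"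
  define B where "B = {v::nat\<Rightarrow>real. \<forall>j. v j \<in> (if j < n then {-R..R} else {0})}"
  have cB: "compact B" unfolding B_def by (rule compact_box) auto
  have inB: "b \<in> B" if b: "b \<in> A" and le: "N (\<lambda>j. z j - b j) \<le> r" for b
  proof -
    have bR: "b \<in> Rn n" using b A by auto
    have "c * (\<Sum>j<n. \<bar>z j - b j\<bar>) \<le> r" using c(2)[OF Rn_diff[OF z bR]] le by simp
    then have s: "(\<Sum>j<n. \<bar>z j - b j\<bar>) \<le> r / c" using c(1) by (simp add: field_simps mult.commute)
    have "-R \<le> b j \<and> b j \<le> R" if j: "j < n" for j
    proof -
      have "\<bar>b j\<bar> \<le> \<bar>z j\<bar> + \<bar>z j - b j\<bar>" by simp
      also have "\<dots> \<le> (\<Sum>j<n. \<bar>z j\<bar>) + (\<Sum>j<n. \<bar>z j - b j\<bar>)"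
        by (intro add_mono member_le_sum) (use j in auto)
      finally have "\<bar>b j\<bar> \<le> R" using s by (simp add: R_def)
      then show ?thesis by arith
    qed
    then show ?thesis using bR by (auto simp: B_def Rn_def)
  qed
  define K where "K = B \<inter> A"
  have cK: "compact K" unfolding K_def using cB A(3) by blast
  have neK: "K \<noteq> {}" using inB[OF a0] a0 by (auto simp: K_def r_def)
  have "continuous_on K (\<lambda>b. N (\<lambda>j. z j - b j))"
  proof (rule continuous_on_compose2[OF nrm_cont[OF N]])
    show "continuous_on K (\<lambda>b j. z j - b j)"
      by (intro continuous_intros continuous_on_subset[OF continuous_on_product_coordinates]) auto
    show "(\<lambda>b j. z j - b j) ` K \<subseteq> Rn n" using A z by (auto simp: K_def intro: Rn_diff)
  qed
  then obtain a where a: "a \<in> K" "\<And>b. b \<in> K \<Longrightarrow> N (\<lambda>j. z j - a j) \<le> N (\<lambda>j. z j - b j)"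
    using continuous_attains_inf[OF cK neK] by blast
  have "N (\<lambda>j. z j - a j) \<le> r" using a(2) inB[OF a0] a0 by (auto simp: K_def r_def)
  then have "\<forall>b\<in>A. N (\<lambda>j. z j - a j) \<le> N (\<lambda>j. z j - b j)"
    using a(2) inB by (force simp: K_def)
  then show ?thesis using a(1) by (auto simp: K_def)
qed


theorem lemma2:
  fixes n :: "nat \<Rightarrow> nat"
    and N :: "nat \<Rightarrow> (nat \<Rightarrow> real) \<Rightarrow> real"
    and A :: "nat \<Rightarrow> (nat \<Rightarrow> real) set"
    and x :: "nat \<Rightarrow> nat \<Rightarrow> real"
  assumes npos: "\<And>i. n i > 0"
    and norms: "\<And>i. is_norm_on (n i) (N i)"
    and Asub: "\<And>i. A i \<subseteq> Rn (n i)"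
    and Ane: "\<And>i. A i \<noteq> {}"
    and Aclosed: "\<And>i. closed (A i)"
    and Ine: "{y \<in> Xsp n N. \<forall>i. y i \<in> A i} \<noteq> {}"
    and x: "x \<in> Xsp n N"
  shows "\<exists>ystar \<in> {y \<in> Xsp n N. \<forall>i. y i \<in> A i}.
           dist_setX N {y \<in> Xsp n N. \<forall>i. y i \<in> A i} x = (SUP i. dist_set (N i) (A i) (x i))
         \<and> (SUP i. dist_set (N i) (A i) (x i)) = norm_inf N (\<lambda>i j. x i j - ystar i j)"
proof -
  define I where "I = {y \<in> Xsp n N. \<forall>i. y i \<in> A i}"
  have xR: "x i \<in> Rn (n i)" for i using x by (simp add: Xsp_def)
  obtain Bx where Bx: "\<And>i. N i (x i) \<le> Bx" using x by (auto simp: Xsp_def bdd_above_def)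
  obtain a where a: "a \<in> I" using Ine I_def by blast
  have aR: "a i \<in> Rn (n i)" "a i \<in> A i" for i using a by (auto simp: I_def Xsp_def)
  obtain Ba where Ba: "\<And>i. N i (a i) \<le> Ba" using a by (auto simp: I_def Xsp_def bdd_above_def)
  have "\<exists>y. y \<in> A i \<and> (\<forall>b\<in>A i. N i (\<lambda>j. x i j - y j) \<le> N i (\<lambda>j. x i j - b j))" for i
    using attain[OF norms npos xR Asub Ane Aclosed] by blast
  then obtain y where yA: "\<And>i. y i \<in> A i"
    and ymin: "\<And>i b. b \<in> A i \<Longrightarrow> N i (\<lambda>j. x i j - y i j) \<le> N i (\<lambda>j. x i j - b j)"
    by metis
  have yR: "y i \<in> Rn (n i)" for i using yA Asub by blast
  have dist_eq: "dist_set (N i) (A i) (x i) = N i (\<lambda>j. x i j - y i j)" for i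
    unfolding dist_set_def by (rule cInf_eq_minimum) (use yA ymin in auto)
  have dle: "N i (\<lambda>j. x i j - y i j) \<le> Bx + Ba" for i
  proof -
    have "N i (\<lambda>j. x i j - y i j) \<le> N i (\<lambda>j. x i j - a i j)" using ymin aR by blast
    also have "\<dots> \<le> N i (x i) + N i (a i)" by (rule nrm_tri_diff[OF norms xR aR(1)])
    finally show ?thesis using Bx[of i] Ba[of i] by linarith
  qed
  have yI: "y \<in> I"
  proof -
    have "N i (y i) \<le> N i (x i) + N i (\<lambda>j. y i j - x i j)" for i by (rule nrm_rev[OF norms yR xR])
    moreover have "N i (\<lambda>j. y i j - x i j) = N i (\<lambda>j. x i j - y i j)" for i
      by (rule nrm_sym[OF norms yR xR])
    ultimately have "N i (y i) \<le> Bx + (Bx + Ba)" for i using Bx[of i] dle[of i] by (metis add_mono order_trans)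
    then have "bdd_above (range (\<lambda>i. N i (y i)))" by (auto simp: bdd_above_def)
    then show ?thesis using yA yR by (auto simp: I_def Xsp_def)
  qed
  have sup_eq: "(SUP i. dist_set (N i) (A i) (x i)) = norm_inf N (\<lambda>i j. x i j - y i j)"
    by (simp add: dist_eq norm_inf_def)
  have bddd: "bdd_above (range (\<lambda>i. N i (\<lambda>j. x i j - y i j)))"
    using dle by (auto simp: bdd_above_def)
  have "dist_setX N I x = norm_inf N (\<lambda>i j. x i j - y i j)"
    unfolding dist_setX_def
  proof (rule cInf_eq_minimum)
    show "norm_inf N (\<lambda>i j. x i j - y i j) \<in> (\<lambda>y. norm_inf N (\<lambda>i j. x i j - y i j)) ` I"
      using yI by blast
  next
    fix t assume "t \<in> (\<lambda>y. norm_inf N (\<lambda>i j. x i j - y i j)) ` I"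
    then obtain w where w: "w \<in> I" and t: "t = norm_inf N (\<lambda>i j. x i j - w i j)" by blast
    have wR: "w i \<in> Rn (n i)" "w i \<in> A i" for i using w by (auto simp: I_def Xsp_def)
    obtain Bw where Bw: "\<And>i. N i (w i) \<le> Bw" using w by (auto simp: I_def Xsp_def bdd_above_def)
    have "N i (\<lambda>j. x i j - w i j) \<le> Bx + Bw" for i
      using nrm_tri_diff[OF norms xR wR(1), of i] Bx[of i] Bw[of i] by linarith
    then have bw: "bdd_above (range (\<lambda>i. N i (\<lambda>j. x i j - w i j)))" by (auto simp: bdd_above_def)
    show "norm_inf N (\<lambda>i j. x i j - y i j) \<le> t"
      unfolding t norm_inf_def
      by (rule cSUP_mono[OF _ bw]) (use ymin wR in blast)+
  qed
  then show ?thesis using yI sup_eq unfolding I_def by auto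
qed

end
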